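(* Let $f:[0,1]^n\to[0,1]$ be implementable by a Bernoulli factory, and suppose that for some open face $F_{A,S,B}$ of the hypercube we have $f|_{F_{A,S,B}}\not\equiv 0$. Then there exist an integer $m\ge 0$ and a constant $c>0$ such that $f(p)\ge c\left((1-p)^A\, p^S(1-p)^S\, p^B\right)^m$ for all $p\in[0,1]^n$.
   Context: A (multiparameter) Bernoulli factory with input $(p_1,\dots,p_n)$ is a (possibly infinite) rooted binary tree in which every node has either $2$ children or $0$ children (leaf). Each internal node is labelled either by an index $i\in[n]$ or by a constant $c\in(0,1)$; each leaf is labelled $0$ or $1$. To execute it with coins $p\in[0,1]^n$, start at the root; at a node labelled $i$ draw a fresh independent Bernoulli($p_i$) sample, at a node labelled $c$ a fresh independent Bernoulli($c$) sample; move to the child corresponding to the outcome; upon reaching a leaf output its label. $f$ is implementable by a Bernoulli factory if there is such a tree which, for every $p\in[0,1]^n$, reaches a leaf almost surely and outputs $1$ with probability exactly $f(p)$. For a partition $[n]=A\sqcup S\sqcup B$, the open face is $F_{A,S,B}=\{p\in[0,1]^n: p_i=0\ (i\in A),\ 0<p_i<1\ (i\in S),\ p_i=1\ (i\in B)\}$. For $T\subseteq[n]$, $p^T=\prod_{i\in T}p_i$, $(1-p)^T=\prod_{i\in T}(1-p_i)$. $f|_X\equiv 0$ means $f$ vanishes on all of $X$. *)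

theory Defs
  imports "HOL-Analysis.Analysis"
begin

text \<open>Coins are indexed 0..n-1 (for [n]).
  For an internal node, the child reached on outcome 1 is addressed by appending True,
  on outcome 0 by appending False. A (possibly infinite) rooted binary tree is encoded as
  a labelling of all finite binary addresses; addresses below a leaf are irrelevant.\<close>
datatype node = Coin nat | Const real | Leaf bool

type_synonym tree = "bool list \<Rightarrow> node"

definition is_leaf :: "node \<Rightarrow> bool" where
  "is_leaf x \<longleftrightarrow> (\<exists>b. x = Leaf b)"

definition wf_tree :: "nat \<Rightarrow> tree \<Rightarrow> bool" where
  "wf_tree n t \<longleftrightarrow> (\<forall>w. (\<forall>i. t w = Coin i \<longrightarrow> i < n) \<and> (\<forall>c. t w = Const c \<longrightarrow> 0 < c \<and> c < 1))"

definition reachable :: "tree \<Rightarrow> bool list \<Rightarrow> bool" where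
  "reachable t w \<longleftrightarrow> (\<forall>k < length w. \<not> is_leaf (t (take k w)))"

fun step_prob :: "(nat \<Rightarrow> real) \<Rightarrow> node \<Rightarrow> bool \<Rightarrow> real" where
  "step_prob p (Coin i) b = (if b then p i else 1 - p i)"
| "step_prob p (Const c) b = (if b then c else 1 - c)"
| "step_prob p (Leaf _) b = 0"

definition path_prob :: "tree \<Rightarrow> (nat \<Rightarrow> real) \<Rightarrow> bool list \<Rightarrow> real" where
  "path_prob t p w = (\<Prod>k<length w. step_prob p (t (take k w)) (w ! k))"

definition cube :: "nat \<Rightarrow> (nat \<Rightarrow> real) set" where
  "cube n = {p. \<forall>i<n. 0 \<le> p i \<and> p i \<le> 1}"

definition implements :: "nat \<Rightarrow> tree \<Rightarrow> ((nat \<Rightarrow> real) \<Rightarrow> real) \<Rightarrow> bool" where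
  "implements n t f \<longleftrightarrow> wf_tree n t \<and>
     (\<forall>p \<in> cube n.
        (path_prob t p has_sum 1) {w. reachable t w \<and> is_leaf (t w)} \<and>
        (path_prob t p has_sum f p) {w. reachable t w \<and> t w = Leaf True})"

definition bernoulli_factory_implementable :: "nat \<Rightarrow> ((nat \<Rightarrow> real) \<Rightarrow> real) \<Rightarrow> bool" where
  "bernoulli_factory_implementable n f \<longleftrightarrow> (\<exists>t. implements n t f)"

definition open_face :: "nat set \<Rightarrow> nat set \<Rightarrow> nat set \<Rightarrow> (nat \<Rightarrow> real) set" where
  "open_face A S B = {p. (\<forall>i\<in>A. p i = 0) \<and> (\<forall>i\<in>S. 0 < p i \<and> p i < 1) \<and> (\<forall>i\<in>B. p i = 1)}"

end

theory Submission
  imports Defs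
begin

lemma prod_le_member:
  fixes g :: "nat \<Rightarrow> real"
  assumes "finite X" "\<forall>j\<in>X. 0 \<le> g j \<and> g j \<le> 1" "i \<in> X"
  shows "prod g X \<le> g i"
proof -
  have "prod g X = g i * prod g (X - {i})" using assms by (simp add: prod.remove)
  moreover have "prod g (X - {i}) \<le> 1" using assms by (intro prod_le_1) auto
  moreover have "0 \<le> prod g (X - {i})" using assms by (intro prod_nonneg) auto
  moreover have "0 \<le> g i" using assms by auto
  ultimately show ?thesis by (simp add: mult_left_le)
qed

lemma step_nonneg:
  assumes "wf_tree n t" "p \<in> cube n"
  shows "0 \<le> step_prob p (t w) b"
proof (cases "t w")
  case (Coin i)
  then have "i < n" using assms unfolding wf_tree_def by auto
  then show ?thesis using assms Coin unfolding cube_def by auto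
next
  case (Const c)
  have "0 < c \<and> c < 1" using assms(1) Const unfolding wf_tree_def by blast
  then show ?thesis using Const by auto
qed auto

theorem lemma2:
  fixes n :: nat and f :: "(nat \<Rightarrow> real) \<Rightarrow> real" and A S B :: "nat set"
  assumes "bernoulli_factory_implementable n f"
    and "A \<union> S \<union> B = {..<n}" and "A \<inter> S = {}" and "A \<inter> B = {}" and "S \<inter> B = {}"
    and "\<exists>p \<in> open_face A S B. p \<in> cube n \<and> f p \<noteq> 0"
  shows "\<exists>m::nat. \<exists>c>0. \<forall>p \<in> cube n.
           f p \<ge> c * ((\<Prod>i\<in>A. 1 - p i) * (\<Prod>i\<in>S. p i) * (\<Prod>i\<in>S. 1 - p i) * (\<Prod>i\<in>B. p i)) ^ m"
proof -
  obtain t where imp: "implements n t f" using assms(1) unfolding bernoulli_factory_implementable_def by auto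
  have wf: "wf_tree n t" using imp unfolding implements_def by auto
  have hs: "\<And>p. p \<in> cube n \<Longrightarrow> (path_prob t p has_sum f p) {w. reachable t w \<and> t w = Leaf True}"
    using imp unfolding implements_def by auto
  obtain p0 where p0: "p0 \<in> open_face A S B" "p0 \<in> cube n" "f p0 \<noteq> 0" using assms(6) by auto
  have ppnn: "\<And>p w. p \<in> cube n \<Longrightarrow> 0 \<le> path_prob t p w"
    unfolding path_prob_def by (intro prod_nonneg) (auto intro: step_nonneg[OF wf])
  obtain w where w: "w \<in> {w. reachable t w \<and> t w = Leaf True}" "path_prob t p0 w \<noteq> 0"
  proof (rule ccontr)
    assume "\<not> thesis"
    then have "\<And>w. w \<in> {w. reachable t w \<and> t w = Leaf True} \<Longrightarrow> path_prob t p0 w = 0" using that by blast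
    then have "(path_prob t p0 has_sum 0) {w. reachable t w \<and> t w = Leaf True}" by (rule has_sum_0)
    with hs[OF p0(2)] have "f p0 = 0" using has_sum_unique by blast
    with p0 show False by auto
  qed
  define Q where "Q p = ((\<Prod>i\<in>A. 1 - p i) * (\<Prod>i\<in>S. p i) * (\<Prod>i\<in>S. 1 - p i) * (\<Prod>i\<in>B. p i))" for p :: "nat \<Rightarrow> real"
  have fin: "finite A" "finite S" "finite B" using assms(2)
    by (metis finite_Un finite_lessThan)+
  have Qb: "0 \<le> Q p \<and> (\<forall>i\<in>A. Q p \<le> 1 - p i) \<and> (\<forall>i\<in>S. Q p \<le> p i \<and> Q p \<le> 1 - p i) \<and> (\<forall>i\<in>B. Q p \<le> p i)"
    if p: "p \<in> cube n" for p
  proof -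
    have r: "\<forall>i\<in>A\<union>S\<union>B. 0 \<le> p i \<and> p i \<le> 1" using p assms(2) unfolding cube_def by auto
    define a where "a = (\<Prod>i\<in>A. 1 - p i)"
    define b where "b = (\<Prod>i\<in>S. p i)"
    define c where "c = (\<Prod>i\<in>S. 1 - p i)"
    define d where "d = (\<Prod>i\<in>B. p i)"
    have ab: "0 \<le> a" "a \<le> 1" unfolding a_def using r by (auto intro!: prod_nonneg prod_le_1)
    have bb: "0 \<le> b" "b \<le> 1" unfolding b_def using r by (auto intro!: prod_nonneg prod_le_1)
    have cb: "0 \<le> c" "c \<le> 1" unfolding c_def using r by (auto intro!: prod_nonneg prod_le_1)
    have db: "0 \<le> d" "d \<le> 1" unfolding d_def using r by (auto intro!: prod_nonneg prod_le_1)
    have Qe: "Q p = a * b * c * d" unfolding Q_def a_def b_def c_def d_def by simp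
    have "Q p \<le> a" "Q p \<le> b" "Q p \<le> c" "Q p \<le> d" unfolding Qe using ab bb cb db
    proof -
      have bcd: "0 \<le> b*c*d" "b*c*d \<le> 1" using bb cb db by (auto intro: mult_le_one)
      have acd: "0 \<le> a*c*d" "a*c*d \<le> 1" using ab cb db by (auto intro: mult_le_one)
      have abd: "0 \<le> a*b*d" "a*b*d \<le> 1" using ab bb db by (auto intro: mult_le_one)
      have abc: "0 \<le> a*b*c" "a*b*c \<le> 1" using ab bb cb by (auto intro: mult_le_one)
      have e: "a*b*c*d = a*(b*c*d)" "a*b*c*d = b*(a*c*d)" "a*b*c*d = c*(a*b*d)" "a*b*c*d = d*(a*b*c)"
        by (simp_all add: ac_simps)
      show "a*b*c*d \<le> a" unfolding e(1) using mult_left_le[OF bcd(2) ab(1)] .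
      show "a*b*c*d \<le> b" unfolding e(2) using mult_left_le[OF acd(2) bb(1)] .
      show "a*b*c*d \<le> c" unfolding e(3) using mult_left_le[OF abd(2) cb(1)] .
      show "a*b*c*d \<le> d" unfolding e(4) using mult_left_le[OF abc(2) db(1)] .
    qed
    moreover have "\<forall>i\<in>A. a \<le> 1 - p i" unfolding a_def using r fin by (auto intro!: prod_le_member)
    moreover have "\<forall>i\<in>S. b \<le> p i" unfolding b_def using r fin by (auto intro!: prod_le_member)
    moreover have "\<forall>i\<in>S. c \<le> 1 - p i" unfolding c_def using r fin by (auto intro!: prod_le_member)
    moreover have "\<forall>i\<in>B. d \<le> p i" unfolding d_def using r fin by (auto intro!: prod_le_member)
    moreover have "0 \<le> Q p" unfolding Qe using ab bb cb db by simp
    ultimately show ?thesis by force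
  qed
  define a where "a k = (case t (take k w) of Const c \<Rightarrow> step_prob p0 (Const c) (w ! k) | _ \<Rightarrow> 1)" for k
  have nz: "step_prob p0 (t (take k w)) (w ! k) \<noteq> 0" if "k < length w" for k
    using w(2) that unfolding path_prob_def by auto
  have apos: "0 < a k" for k
  proof (cases "t (take k w)")
    case (Const c) then show ?thesis using wf unfolding a_def wf_tree_def by auto
  qed (auto simp: a_def)
  have stepb: "a k * Q p \<le> step_prob p (t (take k w)) (w ! k)" if "k < length w" "p \<in> cube n" for k p
  proof (cases "t (take k w)")
    case (Coin i)
    have i: "i < n" using wf Coin unfolding wf_tree_def by auto
    have p0r: "0 \<le> p0 i" "p0 i \<le> 1" using p0(2) i unfolding cube_def by auto
    have "step_prob p0 (Coin i) (w ! k) \<noteq> 0" using nz[OF that(1)] Coin by simp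
    then have h: "(w ! k \<and> p0 i \<noteq> 0) \<or> (\<not> w ! k \<and> p0 i \<noteq> 1)" by (auto split: if_splits)
    have "Q p \<le> step_prob p (Coin i) (w ! k)"
    proof (cases "w ! k")
      case True
      then have "i \<notin> A" using h p0(1) unfolding open_face_def by auto
      then have "i \<in> S \<or> i \<in> B" using i assms(2) by auto
      then show ?thesis using True Qb[OF that(2)] by auto
    next
      case False
      then have "i \<notin> B" using h p0(1) unfolding open_face_def by auto
      then have "i \<in> S \<or> i \<in> A" using i assms(2) by auto
      then show ?thesis using False Qb[OF that(2)] by auto
    qed
    then show ?thesis using Coin by (simp add: a_def)
  next
    case (Const c)
    have c: "0 < c" "c < 1" using wf Const unfolding wf_tree_def by auto
    have Q1: "Q p \<le> 1" "0 \<le> Q p"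
    proof -
      have r: "\<forall>i\<in>A\<union>S\<union>B. 0 \<le> p i \<and> p i \<le> 1" using that(2) assms(2) unfolding cube_def by auto
      show "Q p \<le> 1" unfolding Q_def using r
        by (intro mult_le_one prod_le_1 prod_nonneg mult_nonneg_nonneg) auto
      show "0 \<le> Q p" using Qb[OF that(2)] by auto
    qed
    have "a k = step_prob p (Const c) (w ! k)" using Const by (simp add: a_def)
    moreover have "0 \<le> step_prob p (Const c) (w ! k)" using c by auto
    ultimately show ?thesis using Const Q1 by (simp add: mult_left_le)
  next
    case (Leaf b)
    then show ?thesis using nz[OF that(1)] by simp
  qed
  show ?thesis
  proof (intro exI[of _ "length w"] exI[of _ "\<Prod>k<length w. a k"] conjI ballI)
    show "0 < (\<Prod>k<length w. a k)" using apos by (simp add: prod_pos)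
    fix p assume p: "p \<in> cube n"
    have "(\<Prod>k<length w. a k) * Q p ^ length w = (\<Prod>k<length w. a k * Q p)"
      by (simp add: prod.distrib)
    also have "\<dots> \<le> path_prob t p w" unfolding path_prob_def
      using apos Qb[OF p] stepb[OF _ p] by (intro prod_mono) (auto intro: less_imp_le mult_nonneg_nonneg)
    also have "\<dots> \<le> f p"
    proof -
      have s1: "(path_prob t p has_sum path_prob t p w) {w}"
        using has_sum_finite[of "{w}" "path_prob t p"] by simp
      show ?thesis
    proof (rule has_sum_mono_neutral[OF s1 hs[OF p]])
      fix x assume "x \<in> {w} - {w. reachable t w \<and> t w = Leaf True}" then show "path_prob t p x \<le> 0"
        using w(1) by auto
    qed (auto intro: ppnn[OF p])
    qed
    finally have "(\<Prod>k<length w. a k) * Q p ^ length w \<le> f p" .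
    then show "(\<Prod>k<length w. a k) * ((\<Prod>i\<in>A. 1 - p i) * (\<Prod>i\<in>S. p i) * (\<Prod>i\<in>S. 1 - p i) * (\<Prod>i\<in>B. p i)) ^ length w \<le> f p"
      by (simp add: Q_def)
  qed
qed

end
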